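(* Let $(X,f)$ be a dynamical system and let $\mathcal{F}\subset\mathcal{F}_{inf}$ be a proper translation $+$ invariant Furstenberg family. Then $(X,f)$ is $\mathcal{F}$-transitive if and only if $(X,f)$ is $\nabla(\mathcal{F})$-point transitive.
   Context: A dynamical system is a pair $(X,f)$ with $X$ a compact metric space and $f:X\to X$ continuous. $\mathbb{N}=\{1,2,\dots\}$, $\mathbb{Z}_+=\{0,1,2,\dots\}$. For $U,V\subset X$ and $x\in X$: $N(U,V)=\{n\in\mathbb{N}: U\cap f^{-n}(V)\neq\emptyset\}$ and $N(x,U)=\{n\in\mathbb{N}: f^n(x)\in U\}$. A Furstenberg family is a collection $\mathcal{F}$ of subsets of $\mathbb{N}$ such that $F_1\subset F_2$ and $F_1\in\mathcal{F}$ imply $F_2\in\mathcal{F}$; it is proper if it is neither empty nor the collection of all subsets of $\mathbb{N}$; it is translation $+$ invariant if $F+n\in\mathcal{F}$ for all $F\in\mathcal{F}$ and $n\in\mathbb{Z}_+$, where $F+n=\{k+n:k\in F\}$. $\mathcal{F}_{inf}$ is the family of all infinite subsets of $\mathbb{N}$. $(X,f)$ is $\mathcal{F}$-transitive if $N(U,V)\in\mathcal{F}$ for all non-empty open $U,V\subset X$. A point $x$ is an $\mathcal{F}$-transitive point if $N(x,U)\in\mathcal{F}$ for every non-empty open $U$; $(X,f)$ is $\mathcal{F}$-point transitive if such a point exists. For $F\subset\mathbb{N}$, $F-F=\{a-b: a,b\in F,\ a>b\}$, and $\nabla(\mathcal{F})=\{F\subset\mathbb{N}: F-F\in\mathcal{F}\}$.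 *)

theory Defs
  imports "HOL-Analysis.Analysis"
begin

text \<open>Subsets of the positive integers are modelled as subsets of {1..} :: nat set.\<close>

definition dynamical_system :: "'a::metric_space set \<Rightarrow> ('a \<Rightarrow> 'a) \<Rightarrow> bool" where
  "dynamical_system X f \<longleftrightarrow> compact X \<and> continuous_on X f \<and> f ` X \<subseteq> X"

definition furstenberg_family :: "nat set set \<Rightarrow> bool" where
  "furstenberg_family \<F> \<longleftrightarrow> \<F> \<subseteq> Pow {1..} \<and>
     (\<forall>F1 F2. F1 \<subseteq> F2 \<and> F2 \<subseteq> {1..} \<and> F1 \<in> \<F> \<longrightarrow> F2 \<in> \<F>)"

definition proper_family :: "nat set set \<Rightarrow> bool" where
  "proper_family \<F> \<longleftrightarrow> \<F> \<noteq> {} \<and> \<F> \<noteq> Pow {1..}"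

definition translation_plus_invariant :: "nat set set \<Rightarrow> bool" where
  "translation_plus_invariant \<F> \<longleftrightarrow> (\<forall>F\<in>\<F>. \<forall>n::nat. (\<lambda>k. k + n) ` F \<in> \<F>)"

definition F_inf :: "nat set set" where
  "F_inf = {F. F \<subseteq> {1..} \<and> infinite F}"

definition hitting_times :: "('a \<Rightarrow> 'a) \<Rightarrow> 'a set \<Rightarrow> 'a set \<Rightarrow> nat set" where
  "hitting_times f U V = {n. n \<ge> 1 \<and> (\<exists>x\<in>U. (f ^^ n) x \<in> V)}"

definition visit_times :: "('a \<Rightarrow> 'a) \<Rightarrow> 'a \<Rightarrow> 'a set \<Rightarrow> nat set" where
  "visit_times f x U = {n. n \<ge> 1 \<and> (f ^^ n) x \<in> U}"

definition F_transitive :: "nat set set \<Rightarrow> 'a::topological_space set \<Rightarrow> ('a \<Rightarrow> 'a) \<Rightarrow> bool" where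
  "F_transitive \<F> X f \<longleftrightarrow>
     (\<forall>U V. openin (top_of_set X) U \<and> U \<noteq> {} \<and> openin (top_of_set X) V \<and> V \<noteq> {}
        \<longrightarrow> hitting_times f U V \<in> \<F>)"

definition F_transitive_point :: "nat set set \<Rightarrow> 'a::topological_space set \<Rightarrow> ('a \<Rightarrow> 'a) \<Rightarrow> 'a \<Rightarrow> bool" where
  "F_transitive_point \<F> X f x \<longleftrightarrow> x \<in> X \<and>
     (\<forall>U. openin (top_of_set X) U \<and> U \<noteq> {} \<longrightarrow> visit_times f x U \<in> \<F>)"

definition F_point_transitive :: "nat set set \<Rightarrow> 'a::topological_space set \<Rightarrow> ('a \<Rightarrow> 'a) \<Rightarrow> bool" where
  "F_point_transitive \<F> X f \<longleftrightarrow> (\<exists>x. F_transitive_point \<F> X f x)"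

definition diff_set :: "nat set \<Rightarrow> nat set" where
  "diff_set F = {a - b | a b. a \<in> F \<and> b \<in> F \<and> a > b}"

definition nabla :: "nat set set \<Rightarrow> nat set set" where
  "nabla \<F> = {F. F \<subseteq> {1..} \<and> diff_set F \<in> \<F>}"

end

theory Submission
  imports Defs
begin

lemma funpow_in: "f ` X \<subseteq> X \<Longrightarrow> x \<in> X \<Longrightarrow> (f^^n) x \<in> X"
  by (induction n) auto

lemma funpow_cont: "continuous_on X f \<Longrightarrow> f ` X \<subseteq> X \<Longrightarrow> continuous_on X (f^^n)"
proof (induction n)
  case 0 then show ?case by (simp add: continuous_on_id')
next
  case (Suc n)
  have im: "(f^^n) ` X \<subseteq> X" using funpow_in[OF Suc.prems(2)] by auto
  have "continuous_on X (f \<circ> (f^^n))"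
    by (rule continuous_on_compose[OF Suc.IH[OF Suc.prems]])
       (rule continuous_on_subset[OF Suc.prems(1) im])
  then show ?case by simp
qed

lemma preimage_openin:
  assumes "continuous_on X f" "f ` X \<subseteq> X" "openin (top_of_set X) V"
  shows "openin (top_of_set X) (X \<inter> (f^^m) -` V)"
proof -
  obtain T where T: "open T" "V = X \<inter> T" using assms(3) by (auto simp: openin_open)
  have "X \<inter> (f^^m) -` V = X \<inter> (f^^m) -` T"
    using funpow_in[OF assms(2)] T(2) by auto
  then show ?thesis
    using continuous_openin_preimage_gen[OF funpow_cont[OF assms(1,2)] T(1)] by simp
qed

lemma diff_set_infinite: "infinite (diff_set N) \<Longrightarrow> infinite N"
proof -
  assume a: "infinite (diff_set N)"
  have "diff_set N \<subseteq> (\<lambda>(a,b). a - b) ` (N \<times> N)"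
    unfolding diff_set_def by auto
  then show "infinite N" using a finite_subset by blast
qed

lemma diff_set_sub: "diff_set N \<subseteq> {1..}"
  unfolding diff_set_def by auto

theorem proposition3p6:
  fixes X :: "'a::metric_space set" and f :: "'a \<Rightarrow> 'a" and \<F> :: "nat set set"
  assumes "dynamical_system X f" and "X \<noteq> {}"
    and "furstenberg_family \<F>" and "proper_family \<F>" and "\<F> \<subseteq> F_inf"
    and "translation_plus_invariant \<F>"
  shows "F_transitive \<F> X f \<longleftrightarrow> F_point_transitive (nabla \<F>) X f"
proof
  have cpt: "compact X" and cont: "continuous_on X f" and inv: "f ` X \<subseteq> X"
    using assms(1) by (auto simp: dynamical_system_def)
  have up: "\<And>A B. A \<in> \<F> \<Longrightarrow> A \<subseteq> B \<Longrightarrow> B \<subseteq> {1..} \<Longrightarrow> B \<in> \<F>"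
    using assms(3) unfolding furstenberg_family_def by blast
  have infF: "\<And>A. A \<in> \<F> \<Longrightarrow> infinite A" using assms(5) by (auto simp: F_inf_def)
  {
    assume FT: "F_transitive \<F> X f"
    have "\<forall>k::nat. \<exists>C. C \<subseteq> X \<and> finite C \<and> X \<subseteq> (\<Union>c\<in>C. ball c (1 / real (Suc k)))"
    proof
      fix k :: nat
      have "X \<subseteq> (\<Union>c\<in>X. ball c (1 / real (Suc k)))" by auto
      then obtain K where "K \<subseteq> X" "finite K" "X \<subseteq> (\<Union>c\<in>K. ball c (1 / real (Suc k)))"
        using compactE_image[OF cpt, of X "\<lambda>c. ball c (1 / real (Suc k))"] by auto
      then show "\<exists>C. C \<subseteq> X \<and> finite C \<and> X \<subseteq> (\<Union>c\<in>C. ball c (1 / real (Suc k)))" by blast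
    qed
    then obtain C where C: "\<And>k. C k \<subseteq> X" "\<And>k. finite (C k)"
      "\<And>k. X \<subseteq> (\<Union>c\<in>C k. ball c (1 / real (Suc k)))" by metis
    define fam where "fam = (\<Union>k. (\<lambda>c. X \<inter> ball c (1 / real (Suc k))) ` C k)"
    have famc: "countable fam" unfolding fam_def
      using C(2) by (intro countable_UN) (auto intro: countable_finite)
    have famo: "openin (top_of_set X) B" if "B \<in> fam" for B
      using that unfolding fam_def by (auto simp: openin_open)
    have basis: "\<exists>B\<in>fam. B \<subseteq> U \<and> B \<noteq> {}" if U: "openin (top_of_set X) U" "y \<in> U" for U y
    proof -
      obtain T where T: "open T" "U = X \<inter> T" using U(1) by (auto simp: openin_open)
      obtain e where e: "e > 0" "ball y e \<subseteq> T" using T U(2) open_contains_ball by blast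
      obtain n :: nat where n: "n > 0" "inverse (real n) < e/2"
        using ex_inverse_of_nat_less[of "e/2"] e(1) by auto
      define k where "k = n - 1"
      have kn: "real (Suc k) = real n" using n(1) by (simp add: k_def)
      define r where "r = 1 / real (Suc k)"
      have r: "r < e/2" "r > 0" using n kn by (auto simp: r_def inverse_eq_divide)
      have yX: "y \<in> X" using U T by auto
      then obtain c where c: "c \<in> C k" "y \<in> ball c r" using C(3)[of k] by (auto simp: r_def)
      have "ball c r \<subseteq> ball y e"
      proof
        fix z assume "z \<in> ball c r"
        then have "dist c z < r" by simp
        moreover have "dist y c < r" using c(2) by (simp add: dist_commute)
        ultimately have "dist y z < e" using dist_triangle[of y z c] r by linarith
        then show "z \<in> ball y e" by simp
      qed
      then have "X \<inter> ball c r \<subseteq> U" using e T by auto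
      moreover have "X \<inter> ball c r \<in> fam" unfolding fam_def r_def using c(1) by blast
      moreover have "c \<in> X \<inter> ball c r" using c(1) C(1) r by auto
      ultimately show ?thesis by blast
    qed
    define G where "G = (\<lambda>B. {z\<in>X. \<exists>n\<ge>1. (f^^n) z \<in> B}) ` fam"
    have Gc: "countable G" unfolding G_def using famc by simp
    have Gprop: "openin (top_of_set X) T \<and> (top_of_set X) closure_of T = topspace (top_of_set X)"
      if TG: "T \<in> G" for T
    proof -
      obtain B where B: "B \<in> fam" "T = {z\<in>X. \<exists>n\<ge>1. (f^^n) z \<in> B}" using TG unfolding G_def by blast
      have "T = (\<Union>n\<in>{1..}. X \<inter> (f^^n) -` B)" using B(2) by auto
      moreover have "openin (top_of_set X) (\<Union>n\<in>{1..}. X \<inter> (f^^n) -` B)"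
        using preimage_openin[OF cont inv famo[OF B(1)]] by (intro openin_Union) auto
      ultimately have o: "openin (top_of_set X) T" by simp
      have "T \<inter> W \<noteq> {}" if W: "openin (top_of_set X) W" "W \<noteq> {}" for W
      proof -
        have Bne: "B \<noteq> {}" using B(1) unfolding fam_def using C(1) by fastforce
        have "hitting_times f W B \<in> \<F>" using FT W Bne famo[OF B(1)] unfolding F_transitive_def by blast
        then have "hitting_times f W B \<noteq> {}" using infF by fastforce
        then obtain n z where "n \<ge> 1" "z \<in> W" "(f^^n) z \<in> B" unfolding hitting_times_def by auto
        moreover have "z \<in> X" using W(1) \<open>z \<in> W\<close> by (auto simp: openin_open)
        ultimately show ?thesis using B(2) by blast
      qed
      then show ?thesis using o dense_intersects_open[of "top_of_set X" T] by (metis inf_commute)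
    qed
    have lc: "locally_compact_space (top_of_set X) \<and> regular_space (top_of_set X)"
      using cpt compact_imp_locally_compact_space compact_space_subtopology compactin_euclidean_iff
        metrizable_imp_regular_space metrizable_space_subtopology metrizable_space_euclidean
      by metis
    have "(top_of_set X) closure_of \<Inter>G = topspace (top_of_set X)"
      by (rule Baire_category) (use lc Gc Gprop in auto)
    then have "(top_of_set X) closure_of (X \<inter> \<Inter>G) = X"
      using closure_of_restrict[of "top_of_set X" "\<Inter>G"] by simp
    then have "X \<inter> \<Inter>G \<noteq> {}" using assms(2) by (metis closure_of_empty)
    then obtain x where x: "x \<in> X" "x \<in> \<Inter>G" by blast
    have "F_transitive_point (nabla \<F>) X f x"
      unfolding F_transitive_point_def
    proof (intro conjI allI impI)
      show "x \<in> X" by fact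
      fix U assume U: "openin (top_of_set X) U \<and> U \<noteq> {}"
      have h: "hitting_times f U U \<in> \<F>" using FT U unfolding F_transitive_def by blast
      have "hitting_times f U U \<subseteq> diff_set (visit_times f x U)"
      proof
        fix n assume "n \<in> hitting_times f U U"
        then obtain z where z: "n \<ge> 1" "z \<in> U" "(f^^n) z \<in> U" unfolding hitting_times_def by auto
        define W where "W = U \<inter> (X \<inter> (f^^n) -` U)"
        have Wo: "openin (top_of_set X) W" unfolding W_def
          using U preimage_openin[OF cont inv, of U n] by auto
        have "z \<in> W" using z U unfolding W_def by (auto simp: openin_open)
        then obtain B where B: "B \<in> fam" "B \<subseteq> W" "B \<noteq> {}" using basis[OF Wo] by blast
        have "{z\<in>X. \<exists>n\<ge>1. (f^^n) z \<in> B} \<in> G" using B(1) unfolding G_def by blast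
        then obtain b where b: "b \<ge> 1" "(f^^b) x \<in> B" using x by blast
        then have "(f^^b) x \<in> U" "(f^^n) ((f^^b) x) \<in> U" using B(2) unfolding W_def by auto
        then have "(f^^(n+b)) x \<in> U" by (simp add: funpow_add)
        then have "n + b \<in> visit_times f x U" "b \<in> visit_times f x U"
          using b \<open>(f^^b) x \<in> U\<close> unfolding visit_times_def by auto
        then show "n \<in> diff_set (visit_times f x U)" unfolding diff_set_def
          using z(1) by (intro CollectI exI[of _ "n+b"] exI[of _ b]) auto
      qed
      then have "diff_set (visit_times f x U) \<in> \<F>" using up h diff_set_sub by blast
      moreover have "visit_times f x U \<subseteq> {1..}" unfolding visit_times_def by auto
      ultimately show "visit_times f x U \<in> nabla \<F>" unfolding nabla_def by blast
    qed
    then show "F_point_transitive (nabla \<F>) X f" unfolding F_point_transitive_def by blast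
  }
  {
    assume "F_point_transitive (nabla \<F>) X f"
    then obtain x where x: "x \<in> X"
      "\<And>U. openin (top_of_set X) U \<Longrightarrow> U \<noteq> {} \<Longrightarrow> visit_times f x U \<in> nabla \<F>"
      unfolding F_point_transitive_def F_transitive_point_def by blast
    have vinf: "infinite (visit_times f x U)" if "openin (top_of_set X) U" "U \<noteq> {}" for U
      using x(2)[OF that] infF diff_set_infinite unfolding nabla_def by blast
    show "F_transitive \<F> X f" unfolding F_transitive_def
    proof (intro allI impI)
      fix U V assume UV: "openin (top_of_set X) U \<and> U \<noteq> {} \<and> openin (top_of_set X) V \<and> V \<noteq> {}"
      obtain b where b: "b \<in> visit_times f x U"
        using vinf[of U] UV by (metis finite.emptyI ex_in_conv)
      obtain a where a: "a > b" "a \<in> visit_times f x V"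
        using vinf[of V] UV infinite_nat_iff_unbounded by blast
      define m where "m = a - b"
      have ma: "m + b = a" "m \<ge> 1" using a(1) by (auto simp: m_def)
      define W where "W = U \<inter> (X \<inter> (f^^m) -` V)"
      have Wo: "openin (top_of_set X) W" unfolding W_def
        using UV preimage_openin[OF cont inv, of V m] by auto
      have "(f^^m) ((f^^b) x) = (f^^a) x" using ma by (metis funpow_add comp_apply)
      then have "(f^^b) x \<in> W" using a b funpow_in[OF inv x(1)]
        unfolding W_def visit_times_def by auto
      then have "W \<noteq> {}" by blast
      then have D: "diff_set (visit_times f x W) \<in> \<F>" using x(2)[OF Wo] unfolding nabla_def by blast
      then have D2: "(\<lambda>k. k + m) ` diff_set (visit_times f x W) \<in> \<F>"
        using assms(6) unfolding translation_plus_invariant_def by blast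
      have "(\<lambda>k. k + m) ` diff_set (visit_times f x W) \<subseteq> hitting_times f U V"
      proof
        fix d assume "d \<in> (\<lambda>k. k + m) ` diff_set (visit_times f x W)"
        then obtain a' b' where ab: "d = a' - b' + m" "a' > b'" "a' \<in> visit_times f x W"
          "b' \<in> visit_times f x W" unfolding diff_set_def by auto
        have z: "(f^^b') x \<in> U" using ab(4) unfolding visit_times_def W_def by auto
        have "(f^^m) ((f^^a') x) \<in> V" using ab(3) unfolding visit_times_def W_def by auto
        moreover have "(f^^d) ((f^^b') x) = (f^^m) ((f^^a') x)"
        proof -
          have "(f^^d) ((f^^b') x) = (f^^(d + b')) x" by (simp add: funpow_add)
          also have "d + b' = m + a'" using ab by simp
          finally show ?thesis by (simp add: funpow_add)
        qed
        ultimately have "(f^^d) ((f^^b') x) \<in> V" by simp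
        moreover have "d \<ge> 1" using ab ma by simp
        ultimately show "d \<in> hitting_times f U V" using z unfolding hitting_times_def by blast
      qed
      moreover have "hitting_times f U V \<subseteq> {1..}" unfolding hitting_times_def by auto
      ultimately show "hitting_times f U V \<in> \<F>" using up D2 by blast
    qed
  }
qed

end
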